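(* Let $\Omega = \Omega_1 \cup \dots \cup \Omega_k$ be a finite grid partitioned into $k$ pairwise disjoint parts ($\Omega_i \cap \Omega_j = \emptyset$ for $i \neq j$), each part being a logically rectangular (structured) set of cells. Suppose the grid has been coarsened by semi-coarsening: in each part $\Omega_m$ a coordinate direction is chosen and the coarse points $\Omega^c_m \subseteq \Omega_m$ are every other line/plane of cells perpendicular to that direction; let $\Omega^c = \Omega^c_1 \cup \dots \cup \Omega^c_k$. Let $P \in \mathbb{R}^{\Omega \times \Omega^c}$ be an interpolation matrix that acts only within parts (i.e. $P_{f,c} = 0$ whenever $f \in \Omega_m$, $c \in \Omega^c_n$ with $m \neq n$), maps coarse points onto themselves (for $c \in \Omega^c_m$ the row of $P$ indexed by $c$ has a single nonzero entry, equal to $1$, in column $c$), and interpolates each fine point $f \in \Omega_m \setminus \Omega^c_m$ using at most two coarse points of $\Omega^c_m$ adjacent to $f$ and aligned with $f$ in the coarsening direction (all other entries of row $f$ are zero). Let $U \in \mathbb{R}^{\Omega \times \Omega}$ be a matrix whose graph contains only connections between boundary points of different parts, i.e. $u_{i,j} = 0$ if $i \in \Omega_m \setminus \delta\Omega_m$ for some $m$, or $j \in \Omega_n \setminus \delta\Omega_n$ for some $n$, and $u_{i,j} = 0$ whenever $i, j \in \Omega_m$ for some $m$. Then the coarse unstructured matrix $U_c = P^T U P \in \mathbb{R}^{\Omega^c \times \Omega^c}$ likewise contains only connections between boundary points of different parts: $u^c_{i,j} = 0$ if $i \in \Omega^c_m \setminus \delta\Omega^c_m$ for some $m$, or $j \in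 \Omega^c_n \setminus \delta\Omega^c_n$ for some $n$, and $u^c_{i,j} = 0$ whenever $i, j \in \Omega^c_m$ for some $m$.
   Context: The part boundary $\delta\Omega_m \subseteq \Omega_m$ is the set of points of $\Omega_m$ that are connected to points of other parts in the graph of $U$ (i.e. $i \in \delta\Omega_m$ iff $u_{i,j} \neq 0$ or $u_{j,i} \neq 0$ for some $j \notin \Omega_m$). The coarse part boundary $\delta\Omega^c_m \subseteq \Omega^c_m$ consists of the coarse points of $\Omega^c_m$ that are either themselves points of $\delta\Omega_m$ or are coarse points used to interpolate some fine point of $\delta\Omega_m$; equivalently, $\delta\Omega^c_m = \{c \in \Omega^c_m : P_{f,c} \neq 0 \text{ for some } f \in \delta\Omega_m\}$. The graph of a matrix has an edge between indices $i$ and $j$ when the $(i,j)$ entry is nonzero. *)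

theory Defs
  imports "HOL-Analysis.Analysis"
begin

text \<open>Matrices are real-valued functions of two point indices; only their entries on the
  relevant index sets (Omega x Omega, Omega x Omega^c) are meaningful.\<close>

definition grid :: "nat \<Rightarrow> (nat \<Rightarrow> 'a set) \<Rightarrow> 'a set" where
  "grid k Om = (\<Union>m<k. Om m)"

definition box :: "nat \<Rightarrow> (nat \<Rightarrow> nat) \<Rightarrow> (nat \<Rightarrow> nat) set" where
  "box d n = {x. (\<forall>i<d. x i < n i) \<and> (\<forall>i\<ge>d. x i = 0)}"

definition adj_aligned :: "nat \<Rightarrow> (nat \<Rightarrow> nat) \<Rightarrow> (nat \<Rightarrow> nat) \<Rightarrow> bool" where
  "adj_aligned dir x y \<longleftrightarrow> (\<forall>i. i \<noteq> dir \<longrightarrow> x i = y i) \<and> (x dir = y dir + 1 \<or> y dir = x dir + 1)"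

definition part_boundary :: "nat \<Rightarrow> (nat \<Rightarrow> 'a set) \<Rightarrow> ('a \<Rightarrow> 'a \<Rightarrow> real) \<Rightarrow> nat \<Rightarrow> 'a set" where
  "part_boundary k Om U m =
     {i \<in> Om m. \<exists>j \<in> grid k Om - Om m. U i j \<noteq> 0 \<or> U j i \<noteq> 0}"

definition coarse_part_boundary ::
  "nat \<Rightarrow> (nat \<Rightarrow> 'a set) \<Rightarrow> (nat \<Rightarrow> 'a set) \<Rightarrow> ('a \<Rightarrow> 'a \<Rightarrow> real) \<Rightarrow> ('a \<Rightarrow> 'a \<Rightarrow> real) \<Rightarrow> nat \<Rightarrow> 'a set" where
  "coarse_part_boundary k Om Omc U P m =
     {c \<in> Omc m. \<exists>f \<in> part_boundary k Om U m. P f c \<noteq> 0}"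

definition coarse_matrix :: "'a set \<Rightarrow> ('a \<Rightarrow> 'a \<Rightarrow> real) \<Rightarrow> ('a \<Rightarrow> 'a \<Rightarrow> real) \<Rightarrow> 'a \<Rightarrow> 'a \<Rightarrow> real" where
  "coarse_matrix Omega P U i j = (\<Sum>f\<in>Omega. \<Sum>g\<in>Omega. P f i * U f g * P g j)"

end

theory Submission
  imports Defs
begin

theorem theorem3p1:
  fixes k d :: nat
    and Om Omc :: "nat \<Rightarrow> 'a set"
    and coord :: "nat \<Rightarrow> 'a \<Rightarrow> (nat \<Rightarrow> nat)"
    and ext :: "nat \<Rightarrow> nat \<Rightarrow> nat"
    and dir par :: "nat \<Rightarrow> nat"
    and P U :: "'a \<Rightarrow> 'a \<Rightarrow> real"
  assumes fin: "finite (grid k Om)"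
    and disj: "\<And>m n. m < k \<Longrightarrow> n < k \<Longrightarrow> m \<noteq> n \<Longrightarrow> Om m \<inter> Om n = {}"
    and struct: "\<And>m. m < k \<Longrightarrow> bij_betw (coord m) (Om m) (box d (ext m))"
    and dir: "\<And>m. m < k \<Longrightarrow> dir m < d"
    and par: "\<And>m. m < k \<Longrightarrow> par m < 2"
    and coarse: "\<And>m. m < k \<Longrightarrow> Omc m = {p \<in> Om m. coord m p (dir m) mod 2 = par m}"
    and P_parts: "\<And>m n f c. m < k \<Longrightarrow> n < k \<Longrightarrow> m \<noteq> n \<Longrightarrow> f \<in> Om m \<Longrightarrow> c \<in> Omc n
                   \<Longrightarrow> P f c = 0"
    and P_coarse: "\<And>m c c'. m < k \<Longrightarrow> c \<in> Omc m \<Longrightarrow> c' \<in> grid k Omc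
                   \<Longrightarrow> P c c' = (if c' = c then 1 else 0)"
    and P_fine: "\<And>m f c. m < k \<Longrightarrow> f \<in> Om m - Omc m \<Longrightarrow> c \<in> grid k Omc \<Longrightarrow> P f c \<noteq> 0
                   \<Longrightarrow> c \<in> Omc m \<and> adj_aligned (dir m) (coord m f) (coord m c)"
    and P_two: "\<And>m f. m < k \<Longrightarrow> f \<in> Om m - Omc m \<Longrightarrow> card {c \<in> grid k Omc. P f c \<noteq> 0} \<le> 2"
    and U_bnd: "\<And>i j. i \<in> grid k Om \<Longrightarrow> j \<in> grid k Om \<Longrightarrow>
                   (\<exists>m<k. i \<in> Om m - part_boundary k Om U m) \<or>
                   (\<exists>n<k. j \<in> Om n - part_boundary k Om U n) \<Longrightarrow> U i j = 0"
    and U_parts: "\<And>m i j. m < k \<Longrightarrow> i \<in> Om m \<Longrightarrow> j \<in> Om m \<Longrightarrow> U i j = 0"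
  shows "(\<forall>i \<in> grid k Omc. \<forall>j \<in> grid k Omc.
            ((\<exists>m<k. i \<in> Omc m - coarse_part_boundary k Om Omc U P m) \<or>
             (\<exists>n<k. j \<in> Omc n - coarse_part_boundary k Om Omc U P n))
            \<longrightarrow> coarse_matrix (grid k Om) P U i j = 0)
       \<and> (\<forall>m<k. \<forall>i \<in> Omc m. \<forall>j \<in> Omc m. coarse_matrix (grid k Om) P U i j = 0)"
proof -
  have loc: "f \<in> Om m" if H: "f \<in> grid k Om" "m < k" "c \<in> Omc m" "P f c \<noteq> 0" for f m c
  proof -
    obtain m' where m': "m' < k" "f \<in> Om m'" using H(1) unfolding grid_def by blast
    show ?thesis using P_parts[OF m'(1) H(2) _ m'(2) H(3)] H(4) m' by blast
  qed
  have bnd: "f \<in> part_boundary k Om U m" if "f \<in> grid k Om" "g \<in> grid k Om" "m < k" "f \<in> Om m" "U f g \<noteq> 0" for f g m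
    using U_bnd[OF that(1,2)] that by blast
  have bnd2: "g \<in> part_boundary k Om U m" if "f \<in> grid k Om" "g \<in> grid k Om" "m < k" "g \<in> Om m" "U f g \<noteq> 0" for f g m
    using U_bnd[OF that(1,2)] that by blast
  have A: "coarse_matrix (grid k Om) P U i j = 0"
    if h: "(\<exists>m<k. i \<in> Omc m - coarse_part_boundary k Om Omc U P m) \<or>
             (\<exists>n<k. j \<in> Omc n - coarse_part_boundary k Om Omc U P n)" for i j
  proof -
    have "P f i * U f g * P g j = 0" if fg: "f \<in> grid k Om" "g \<in> grid k Om" for f g
    proof (rule ccontr)
      assume nz: "P f i * U f g * P g j \<noteq> 0"
      hence nz1: "P f i \<noteq> 0" "U f g \<noteq> 0" "P g j \<noteq> 0" by auto
      from h show False
      proof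
        assume "\<exists>m<k. i \<in> Omc m - coarse_part_boundary k Om Omc U P m"
        then obtain m where m: "m < k" "i \<in> Omc m" "i \<notin> coarse_part_boundary k Om Omc U P m" by blast
        have "f \<in> Om m" using loc[OF fg(1) m(1,2) nz1(1)] .
        hence "f \<in> part_boundary k Om U m" using bnd[OF fg m(1) _ nz1(2)] by blast
        thus False using m nz1(1) unfolding coarse_part_boundary_def by blast
      next
        assume "\<exists>m<k. j \<in> Omc m - coarse_part_boundary k Om Omc U P m"
        then obtain m where m: "m < k" "j \<in> Omc m" "j \<notin> coarse_part_boundary k Om Omc U P m" by blast
        have "g \<in> Om m" using loc[OF fg(2) m(1,2) nz1(3)] .
        hence "g \<in> part_boundary k Om U m" using bnd2[OF fg m(1) _ nz1(2)] by blast
        thus False using m nz1(3) unfolding coarse_part_boundary_def by blast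
      qed
    qed
    hence Z: "\<And>f g. f \<in> grid k Om \<Longrightarrow> g \<in> grid k Om \<Longrightarrow> P f i * U f g * P g j = 0" by blast
    show ?thesis unfolding coarse_matrix_def by (intro sum.neutral ballI) (simp only: Z)
  qed
  have B: "coarse_matrix (grid k Om) P U i j = 0" if m: "m < k" "i \<in> Omc m" "j \<in> Omc m" for m i j
  proof -
    have "P f i * U f g * P g j = 0" if fg: "f \<in> grid k Om" "g \<in> grid k Om" for f g
    proof (rule ccontr)
      assume nz: "P f i * U f g * P g j \<noteq> 0"
      hence nz1: "P f i \<noteq> 0" "U f g \<noteq> 0" "P g j \<noteq> 0" by auto
      have "f \<in> Om m" using loc[OF fg(1) m(1,2) nz1(1)] .
      moreover have "g \<in> Om m" using loc[OF fg(2) m(1,3) nz1(3)] .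
      ultimately show False using U_parts[OF m(1)] nz1(2) by blast
    qed
    hence Z: "\<And>f g. f \<in> grid k Om \<Longrightarrow> g \<in> grid k Om \<Longrightarrow> P f i * U f g * P g j = 0" by blast
    show ?thesis unfolding coarse_matrix_def by (intro sum.neutral ballI) (simp only: Z)
  qed
  show ?thesis using A B by blast
qed

end
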